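(* Let $n\ge1$ and let $H_n$ be the pyrene system with $n$ pyrene fragments. Then (1) $f(H_n)=n$; (2) $F(H_n)=2n$; (3) $\mathrm{Spec}_f(H_n)=[n,2n]$, i.e. the set of forcing numbers of perfect matchings of $H_n$ is exactly $\{n,n+1,\dots,2n\}$.
   Context: Pyrene system: draw the hexagonal lattice so that every hexagon has two vertical sides; horizontally adjacent hexagons then share a vertical edge. For $n\ge1$, $H_n$ is the hexagonal system (the plane graph formed by the vertices and edges of the following $4n$ hexagons) consisting of a horizontal linear row of $2n$ hexagons $h_{1,1},h_{1,2},\dots,h_{n,1},h_{n,2}$, consecutive ones sharing a vertical edge, together with, for each $i$, a hexagon $s_{i,1}$ directly above and a hexagon $s_{i,2}$ directly below the common edge of $h_{i,1}$ and $h_{i,2}$ (each sharing an edge with both $h_{i,1}$ and $h_{i,2}$). For a perfect matching $M$ of $G$, a forcing set is a subset $S\subseteq M$ contained in no other perfect matching of $G$, and the forcing number $f(G,M)$ is the minimum size of a forcing set. $f(G)$ and $F(G)$ denote the minimum and maximum of $f(G,M)$ over all perfect matchings $M$ of $G$, and $\mathrm{Spec}_f(G)$ is the set of values $f(G,M)$ over all perfect matchings $M$. *)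

theory Defs
  imports Main
begin

definition perfect_matching :: "'a set \<Rightarrow> 'a set set \<Rightarrow> 'a set set \<Rightarrow> bool" where
  "perfect_matching V E M \<longleftrightarrow> M \<subseteq> E \<and> (\<forall>v\<in>V. \<exists>!e. e \<in> M \<and> v \<in> e)"

definition forcing_set :: "'a set \<Rightarrow> 'a set set \<Rightarrow> 'a set set \<Rightarrow> 'a set set \<Rightarrow> bool" where
  "forcing_set V E M S \<longleftrightarrow> S \<subseteq> M \<and>
     (\<forall>M'. perfect_matching V E M' \<and> S \<subseteq> M' \<longrightarrow> M' = M)"

definition forcing_number :: "'a set \<Rightarrow> 'a set set \<Rightarrow> 'a set set \<Rightarrow> nat" where
  "forcing_number V E M = (LEAST k. \<exists>S. forcing_set V E M S \<and> finite S \<and> card S = k)"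

definition forcing_spectrum :: "'a set \<Rightarrow> 'a set set \<Rightarrow> nat set" where
  "forcing_spectrum V E = {forcing_number V E M | M. perfect_matching V E M}"

definition min_forcing_number :: "'a set \<Rightarrow> 'a set set \<Rightarrow> nat" where
  "min_forcing_number V E = Min (forcing_spectrum V E)"

definition max_forcing_number :: "'a set \<Rightarrow> 'a set set \<Rightarrow> nat" where
  "max_forcing_number V E = Max (forcing_spectrum V E)"

text \<open>The hexagon with lower-left corner (x,y) (where x+y is even)
  has vertices (x+a, y+b) for a in {0,1,2}, b in {0,1}; its two vertical sides are
  (x,y)-(x,y+1) and (x+2,y)-(x+2,y+1). Horizontally adjacent hexagons (x,y),(x+2,y) share a
  vertical edge; hexagon (x+1,y+1) lies directly above, and (x+1,y-1) directly below, their
  common vertical edge, sharing an edge with both.\<close>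

definition hex_vertices :: "int \<times> int \<Rightarrow> (int \<times> int) set" where
  "hex_vertices p = (case p of (x, y) \<Rightarrow>
     {(x, y), (x+1, y), (x+2, y), (x, y+1), (x+1, y+1), (x+2, y+1)})"

definition hex_edges :: "int \<times> int \<Rightarrow> (int \<times> int) set set" where
  "hex_edges p = (case p of (x, y) \<Rightarrow>
     {{(x, y), (x+1, y)}, {(x+1, y), (x+2, y)},
      {(x, y+1), (x+1, y+1)}, {(x+1, y+1), (x+2, y+1)},
      {(x, y), (x, y+1)}, {(x+2, y), (x+2, y+1)}})"

text \<open>Pyrene system H_n: row hexagons h_{i,1} = (4i,0), h_{i,2} = (4i+2,0) for i < n
  (i.e. (2k,0) for k < 2n), s_{i,1} = (4i+1,1) above and s_{i,2} = (4i+1,-1) below the common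
  edge x = 4i+2 of h_{i,1} and h_{i,2}.\<close>

definition pyrene_hexagons :: "nat \<Rightarrow> (int \<times> int) set" where
  "pyrene_hexagons n =
     {(2 * int k, 0) | k. k < 2 * n} \<union>
     {(4 * int i + 1, 1) | i. i < n} \<union>
     {(4 * int i + 1, -1) | i. i < n}"

definition pyrene_V :: "nat \<Rightarrow> (int \<times> int) set" where
  "pyrene_V n = (\<Union>h\<in>pyrene_hexagons n. hex_vertices h)"

definition pyrene_E :: "nat \<Rightarrow> (int \<times> int) set set" where
  "pyrene_E n = (\<Union>h\<in>pyrene_hexagons n. hex_edges h)"

end

theory Submission
  imports Defs
begin

definition hE :: "int \<Rightarrow> int \<Rightarrow> (int\<times>int) set" where "hE x y = {(x,y),(x+1,y)}"
definition vE :: "int \<Rightarrow> int \<Rightarrow> (int\<times>int) set" where "vE x y = {(x,y),(x,y+1)}"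

definition e_l0 :: "nat \<Rightarrow> (int \<times> int) set" where "e_l0 i = {(4*int i - 1,0), (4*int i,0)}"
definition e_l1 :: "nat \<Rightarrow> (int \<times> int) set" where "e_l1 i = {(4*int i - 1,1), (4*int i,1)}"
definition e_v0 :: "nat \<Rightarrow> (int \<times> int) set" where "e_v0 i = {(4*int i,0), (4*int i,1)}"
definition e_r0 :: "nat \<Rightarrow> (int \<times> int) set" where "e_r0 i = {(4*int i,0), (4*int i+1,0)}"
definition e_r1 :: "nat \<Rightarrow> (int \<times> int) set" where "e_r1 i = {(4*int i,1), (4*int i+1,1)}"
definition e_a12 :: "nat \<Rightarrow> (int \<times> int) set" where "e_a12 i = {(4*int i+1,(-1)), (4*int i+2,(-1))}"
definition e_a23 :: "nat \<Rightarrow> (int \<times> int) set" where "e_a23 i = {(4*int i+2,(-1)), (4*int i+3,(-1))}"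
definition e_b12 :: "nat \<Rightarrow> (int \<times> int) set" where "e_b12 i = {(4*int i+1,0), (4*int i+2,0)}"
definition e_b23 :: "nat \<Rightarrow> (int \<times> int) set" where "e_b23 i = {(4*int i+2,0), (4*int i+3,0)}"
definition e_c12 :: "nat \<Rightarrow> (int \<times> int) set" where "e_c12 i = {(4*int i+1,1), (4*int i+2,1)}"
definition e_c23 :: "nat \<Rightarrow> (int \<times> int) set" where "e_c23 i = {(4*int i+2,1), (4*int i+3,1)}"
definition e_d12 :: "nat \<Rightarrow> (int \<times> int) set" where "e_d12 i = {(4*int i+1,2), (4*int i+2,2)}"
definition e_d23 :: "nat \<Rightarrow> (int \<times> int) set" where "e_d23 i = {(4*int i+2,2), (4*int i+3,2)}"
definition e_ab1 :: "nat \<Rightarrow> (int \<times> int) set" where "e_ab1 i = {(4*int i+1,(-1)), (4*int i+1,0)}"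
definition e_ab3 :: "nat \<Rightarrow> (int \<times> int) set" where "e_ab3 i = {(4*int i+3,(-1)), (4*int i+3,0)}"
definition e_bc2 :: "nat \<Rightarrow> (int \<times> int) set" where "e_bc2 i = {(4*int i+2,0), (4*int i+2,1)}"
definition e_cd1 :: "nat \<Rightarrow> (int \<times> int) set" where "e_cd1 i = {(4*int i+1,1), (4*int i+1,2)}"
definition e_cd3 :: "nat \<Rightarrow> (int \<times> int) set" where "e_cd3 i = {(4*int i+3,1), (4*int i+3,2)}"
definition e_R0 :: "nat \<Rightarrow> (int \<times> int) set" where "e_R0 i = {(4*int i+3,0), (4*int i+4,0)}"
definition e_R1 :: "nat \<Rightarrow> (int \<times> int) set" where "e_R1 i = {(4*int i+3,1), (4*int i+4,1)}"
definition e_V4 :: "nat \<Rightarrow> (int \<times> int) set" where "e_V4 i = {(4*int i+4,0), (4*int i+4,1)}"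
definition e_n0 :: "nat \<Rightarrow> (int \<times> int) set" where "e_n0 i = e_r0 (Suc i)"
definition e_n1 :: "nat \<Rightarrow> (int \<times> int) set" where "e_n1 i = e_r1 (Suc i)"

lemmas edefs = e_l0_def e_l1_def e_v0_def e_r0_def e_r1_def e_a12_def e_a23_def e_b12_def e_b23_def
  e_c12_def e_c23_def e_d12_def e_d23_def e_ab1_def e_ab3_def e_bc2_def e_cd1_def e_cd3_def
  e_R0_def e_R1_def e_V4_def e_n0_def e_n1_def

definition Frag :: "nat \<Rightarrow> (int \<times> int) set set" where "Frag i = {e_v0 i, e_r0 i, e_r1 i, e_a12 i, e_a23 i, e_b12 i, e_b23 i, e_c12 i, e_c23 i,
  e_d12 i, e_d23 i, e_ab1 i, e_ab3 i, e_bc2 i, e_cd1 i, e_cd3 i, e_R0 i, e_R1 i, e_V4 i}"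

lemma hex_eq: "pyrene_hexagons n = (\<lambda>k. (2*int k,0)) ` {..<2*n} \<union> (\<lambda>i. (4*int i+1,1)) ` {..<n} \<union> (\<lambda>i. (4*int i+1,-1)) ` {..<n}"
  unfolding pyrene_hexagons_def by auto

lemma hex_edges_eq: "hex_edges (x,y) = {hE x y, hE (x+1) y, hE x (y+1), hE (x+1) (y+1), vE x y, vE (x+2) y}"
  unfolding hex_edges_def hE_def vE_def by (simp add: algebra_simps)

lemma lt2n: "{..<2*(n::nat)} = (\<lambda>i. 2*i) ` {..<n} \<union> (\<lambda>i. 2*i+1) ` {..<n}"
proof -
  have "k \<in> (\<lambda>i. 2*i) ` {..<n} \<union> (\<lambda>i. 2*i+1) ` {..<n}" if "k < 2*n" for k
  proof (cases "even k")
    case True then obtain i where "k = 2*i" by blast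
    then show ?thesis using that by auto
  next
    case False then obtain i where "k = 2*i+1" using oddE by blast
    then show ?thesis using that by auto
  qed
  then show ?thesis by auto
qed

lemma Frag_eq: "Frag i = hex_edges (2*int (2*i),0) \<union> hex_edges (2*int (2*i+1),0) \<union> hex_edges (4*int i+1,1) \<union> hex_edges (4*int i+1,-1)"
proof -
  have 1: "2*int (2*i) = 4*int i" "2*int (2*i+1) = 4*int i + 2" by auto
  show ?thesis unfolding 1 hex_edges_eq Frag_def edefs hE_def vE_def
    by (auto simp: algebra_simps)
qed

lemma E_eq: "pyrene_E n = (\<Union>i<n. Frag i)"
  unfolding pyrene_E_def hex_eq UN_Un image_image Frag_eq lt2n UN_Un_distrib by blast

lemma E_iff2: "e \<in> pyrene_E n \<longleftrightarrow> (\<exists>i<n. e \<in> Frag i)"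
  unfolding E_eq by blast

lemma q4a: "0 \<le> c \<Longrightarrow> c < 4 \<Longrightarrow> 0 \<le> d \<Longrightarrow> d < 4 \<Longrightarrow> (4*int a + c = 4*int b + (d::int)) = (a = b \<and> c = d)" by presburger
lemma q4b: "0 < c \<Longrightarrow> c < 4 \<Longrightarrow> (4*int a + c = 4*int b) = False" by presburger
lemma q4c: "0 < c \<Longrightarrow> c < 4 \<Longrightarrow> (4*int a = 4*int b + c) = False" by presburger
lemma q4d: "0 \<le> d \<Longrightarrow> d < 4 \<Longrightarrow> (4*int a + 4 = 4*int b + d) = (d = 0 \<and> b = Suc a)" by presburger
lemma q4e: "0 \<le> d \<Longrightarrow> d < 4 \<Longrightarrow> (4*int b + d = 4*int a + 4) = (d = 0 \<and> b = Suc a)" by presburger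
lemma q4f: "(4*int a + 4 = 4*int b) = (b = Suc a)" by presburger
lemma q4g: "(4*int b = 4*int a + 4) = (b = Suc a)" by presburger
lemma q4h: "(4*int a = 4*int b) = (a = b)" by simp
lemmas q4 = q4a q4b q4c q4d q4e q4f q4g q4h

lemma l0_Suc: "e_l0 (Suc j) = e_R0 j" unfolding e_l0_def e_R0_def by (simp add: algebra_simps)
lemma l1_Suc: "e_l1 (Suc j) = e_R1 j" unfolding e_l1_def e_R1_def by (simp add: algebra_simps)

lemmas edefs' = e_v0_def e_r0_def e_r1_def e_a12_def e_a23_def e_b12_def e_b23_def
  e_c12_def e_c23_def e_d12_def e_d23_def e_ab1_def e_ab3_def e_bc2_def e_cd1_def e_cd3_def
  e_R0_def e_R1_def e_V4_def

lemma Frag_split: "e \<in> Frag ia \<longleftrightarrow> e = e_v0 ia \<or> e = e_r0 ia \<or> e = e_r1 ia \<or> e = e_a12 ia \<or> e = e_a23 ia \<or> e = e_b12 ia \<or> e = e_b23 ia \<or> e = e_c12 ia \<or> e = e_c23 ia \<or>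
  e = e_d12 ia \<or> e = e_d23 ia \<or> e = e_ab1 ia \<or> e = e_ab3 ia \<or> e = e_bc2 ia \<or> e = e_cd1 ia \<or> e = e_cd3 ia \<or> e = e_R0 ia \<or> e = e_R1 ia \<or> e = e_V4 ia"
  unfolding Frag_def by simp

lemma E_nonneg: assumes "e \<in> pyrene_E n" "u \<in> e" shows "0 \<le> fst u"
proof -
  obtain ia where "e \<in> Frag ia" using assms unfolding E_iff2 by blast
  then show ?thesis using assms(2) unfolding Frag_split edefs' by (elim disjE; auto)
qed
lemma l0_0: "e_l0 0 \<notin> pyrene_E n"
  using E_nonneg[of "e_l0 0" n "(-1,0)"] unfolding e_l0_def by auto
lemma l1_0: "e_l1 0 \<notin> pyrene_E n"
  using E_nonneg[of "e_l1 0" n "(-1,1)"] unfolding e_l1_def by auto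


lemma inc_P0: assumes "e \<in> pyrene_E n" "(4*int i,0) \<in> e"
  shows "e = e_l0 i \<or> e = e_v0 i \<or> e = e_r0 i"
proof -
  obtain ia where "e \<in> Frag ia" using assms unfolding E_iff2 by blast
  then have "e = e_v0 i \<or> e = e_r0 i \<or> (i = Suc ia \<and> e = e_R0 ia)" using assms(2)
    unfolding Frag_split edefs' by (elim disjE; simp add: q4 doubleton_eq_iff)
  then show ?thesis using l0_Suc by auto
qed
lemma inc_P1: assumes "e \<in> pyrene_E n" "(4*int i,1) \<in> e"
  shows "e = e_l1 i \<or> e = e_v0 i \<or> e = e_r1 i"
proof -
  obtain ia where "e \<in> Frag ia" using assms unfolding E_iff2 by blast
  then have "e = e_v0 i \<or> e = e_r1 i \<or> (i = Suc ia \<and> e = e_R1 ia)" using assms(2)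
    unfolding Frag_split edefs' by (elim disjE; simp add: q4 doubleton_eq_iff)
  then show ?thesis using l1_Suc by auto
qed
lemma inc_a1: assumes "e \<in> pyrene_E n" "(4*int i+1,(-1)) \<in> e"
  shows "e = e_a12 i \<or> e = e_ab1 i"
proof -
  obtain ia where "e \<in> Frag ia" using assms unfolding E_iff2 by blast
  then show ?thesis using assms(2)
    unfolding Frag_split edefs' by (elim disjE; simp add: q4 doubleton_eq_iff)
qed
lemma inc_a2: assumes "e \<in> pyrene_E n" "(4*int i+2,(-1)) \<in> e"
  shows "e = e_a12 i \<or> e = e_a23 i"
proof -
  obtain ia where "e \<in> Frag ia" using assms unfolding E_iff2 by blast
  then show ?thesis using assms(2)
    unfolding Frag_split edefs' by (elim disjE; simp add: q4 doubleton_eq_iff)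
qed
lemma inc_a3: assumes "e \<in> pyrene_E n" "(4*int i+3,(-1)) \<in> e"
  shows "e = e_a23 i \<or> e = e_ab3 i"
proof -
  obtain ia where "e \<in> Frag ia" using assms unfolding E_iff2 by blast
  then show ?thesis using assms(2)
    unfolding Frag_split edefs' by (elim disjE; simp add: q4 doubleton_eq_iff)
qed
lemma inc_b1: assumes "e \<in> pyrene_E n" "(4*int i+1,0) \<in> e"
  shows "e = e_r0 i \<or> e = e_b12 i \<or> e = e_ab1 i"
proof -
  obtain ia where "e \<in> Frag ia" using assms unfolding E_iff2 by blast
  then show ?thesis using assms(2)
    unfolding Frag_split edefs' by (elim disjE; simp add: q4 doubleton_eq_iff)
qed
lemma inc_b2: assumes "e \<in> pyrene_E n" "(4*int i+2,0) \<in> e"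
  shows "e = e_b12 i \<or> e = e_b23 i \<or> e = e_bc2 i"
proof -
  obtain ia where "e \<in> Frag ia" using assms unfolding E_iff2 by blast
  then show ?thesis using assms(2)
    unfolding Frag_split edefs' by (elim disjE; simp add: q4 doubleton_eq_iff)
qed
lemma inc_b3: assumes "e \<in> pyrene_E n" "(4*int i+3,0) \<in> e"
  shows "e = e_b23 i \<or> e = e_ab3 i \<or> e = e_R0 i"
proof -
  obtain ia where "e \<in> Frag ia" using assms unfolding E_iff2 by blast
  then show ?thesis using assms(2)
    unfolding Frag_split edefs' by (elim disjE; simp add: q4 doubleton_eq_iff)
qed
lemma inc_c1: assumes "e \<in> pyrene_E n" "(4*int i+1,1) \<in> e"
  shows "e = e_r1 i \<or> e = e_c12 i \<or> e = e_cd1 i"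
proof -
  obtain ia where "e \<in> Frag ia" using assms unfolding E_iff2 by blast
  then show ?thesis using assms(2)
    unfolding Frag_split edefs' by (elim disjE; simp add: q4 doubleton_eq_iff)
qed
lemma inc_c2: assumes "e \<in> pyrene_E n" "(4*int i+2,1) \<in> e"
  shows "e = e_c12 i \<or> e = e_c23 i \<or> e = e_bc2 i"
proof -
  obtain ia where "e \<in> Frag ia" using assms unfolding E_iff2 by blast
  then show ?thesis using assms(2)
    unfolding Frag_split edefs' by (elim disjE; simp add: q4 doubleton_eq_iff)
qed
lemma inc_c3: assumes "e \<in> pyrene_E n" "(4*int i+3,1) \<in> e"
  shows "e = e_c23 i \<or> e = e_cd3 i \<or> e = e_R1 i"
proof -
  obtain ia where "e \<in> Frag ia" using assms unfolding E_iff2 by blast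
  then show ?thesis using assms(2)
    unfolding Frag_split edefs' by (elim disjE; simp add: q4 doubleton_eq_iff)
qed
lemma inc_d1: assumes "e \<in> pyrene_E n" "(4*int i+1,2) \<in> e"
  shows "e = e_d12 i \<or> e = e_cd1 i"
proof -
  obtain ia where "e \<in> Frag ia" using assms unfolding E_iff2 by blast
  then show ?thesis using assms(2)
    unfolding Frag_split edefs' by (elim disjE; simp add: q4 doubleton_eq_iff)
qed
lemma inc_d2: assumes "e \<in> pyrene_E n" "(4*int i+2,2) \<in> e"
  shows "e = e_d12 i \<or> e = e_d23 i"
proof -
  obtain ia where "e \<in> Frag ia" using assms unfolding E_iff2 by blast
  then show ?thesis using assms(2)
    unfolding Frag_split edefs' by (elim disjE; simp add: q4 doubleton_eq_iff)
qed
lemma inc_d3: assumes "e \<in> pyrene_E n" "(4*int i+3,2) \<in> e"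
  shows "e = e_d23 i \<or> e = e_cd3 i"
proof -
  obtain ia where "e \<in> Frag ia" using assms unfolding E_iff2 by blast
  then show ?thesis using assms(2)
    unfolding Frag_split edefs' by (elim disjE; simp add: q4 doubleton_eq_iff)
qed

definition one3 :: "bool \<Rightarrow> bool \<Rightarrow> bool \<Rightarrow> bool" where
  "one3 a b c \<longleftrightarrow> (a \<or> b \<or> c) \<and> \<not>(a \<and> b) \<and> \<not>(a \<and> c) \<and> \<not>(b \<and> c)"
definition one2 :: "bool \<Rightarrow> bool \<Rightarrow> bool" where
  "one2 a b \<longleftrightarrow> (a \<noteq> b)"

lemma one3I:
  assumes pm: "perfect_matching V E M" and v: "v \<in> V"
    and inc: "\<And>e. e \<in> E \<Longrightarrow> v \<in> e \<Longrightarrow> e = e1 \<or> e = e2 \<or> e = e3"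
    and "v \<in> e1" "v \<in> e2" "v \<in> e3" "e1 \<noteq> e2" "e1 \<noteq> e3" "e2 \<noteq> e3"
  shows "one3 (e1 \<in> M) (e2 \<in> M) (e3 \<in> M)"
proof -
  from pm have ME: "M \<subseteq> E" and u: "\<exists>!e. e \<in> M \<and> v \<in> e" using v unfolding perfect_matching_def by auto
  then obtain e where e: "e \<in> M" "v \<in> e" by blast
  then have "e = e1 \<or> e = e2 \<or> e = e3" using inc ME by blast
  then have 1: "e1 \<in> M \<or> e2 \<in> M \<or> e3 \<in> M" using e by blast
  have 2: "x = y" if "x \<in> M" "y \<in> M" "v \<in> x" "v \<in> y" for x y using u that by blast
  show ?thesis unfolding one3_def using 1 2 assms(4-9) by blast
qed

lemma one2I:
  assumes pm: "perfect_matching V E M" and v: "v \<in> V"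
    and inc: "\<And>e. e \<in> E \<Longrightarrow> v \<in> e \<Longrightarrow> e = e1 \<or> e = e2"
    and "v \<in> e1" "v \<in> e2" "e1 \<noteq> e2"
  shows "one2 (e1 \<in> M) (e2 \<in> M)"
proof -
  from pm have ME: "M \<subseteq> E" and u: "\<exists>!e. e \<in> M \<and> v \<in> e" using v unfolding perfect_matching_def by auto
  then obtain e where e: "e \<in> M" "v \<in> e" by blast
  then have "e = e1 \<or> e = e2" using inc ME by blast
  then have 1: "e1 \<in> M \<or> e2 \<in> M" using e by blast
  have 2: "x = y" if "x \<in> M" "y \<in> M" "v \<in> x" "v \<in> y" for x y using u that by blast
  show ?thesis unfolding one2_def using 1 2 assms(4-6) by blast
qed

lemma ex1I3:
  assumes "M \<subseteq> E" "\<And>e. e \<in> E \<Longrightarrow> v \<in> e \<Longrightarrow> e = e1 \<or> e = e2 \<or> e = e3"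
    "v \<in> e1" "v \<in> e2" "v \<in> e3" "one3 (e1 \<in> M) (e2 \<in> M) (e3 \<in> M)"
  shows "\<exists>!e. e \<in> M \<and> v \<in> e"
proof -
  have a: "e = e1 \<or> e = e2 \<or> e = e3" if "e \<in> M" "v \<in> e" for e using assms(1,2) that by blast
  consider "e1 \<in> M" "e2 \<notin> M" "e3 \<notin> M" | "e2 \<in> M" "e1 \<notin> M" "e3 \<notin> M" | "e3 \<in> M" "e1 \<notin> M" "e2 \<notin> M"
    using assms(6) unfolding one3_def by blast
  then show ?thesis
  proof cases
    case 1 show ?thesis by (rule ex1I[where a=e1]) (use a 1 assms(3) in blast)+
  next
    case 2 show ?thesis by (rule ex1I[where a=e2]) (use a 2 assms(4) in blast)+
  next
    case 3 show ?thesis by (rule ex1I[where a=e3]) (use a 3 assms(5) in blast)+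
  qed
qed

lemma ex1I2:
  assumes "M \<subseteq> E" "\<And>e. e \<in> E \<Longrightarrow> v \<in> e \<Longrightarrow> e = e1 \<or> e = e2"
    "v \<in> e1" "v \<in> e2" "one2 (e1 \<in> M) (e2 \<in> M)"
  shows "\<exists>!e. e \<in> M \<and> v \<in> e"
proof -
  have a: "e = e1 \<or> e = e2" if "e \<in> M" "v \<in> e" for e using assms(1,2) that by blast
  consider "e1 \<in> M" "e2 \<notin> M" | "e2 \<in> M" "e1 \<notin> M"
    using assms(5) unfolding one2_def by blast
  then show ?thesis
  proof cases
    case 1 show ?thesis by (rule ex1I[where a=e1]) (use a 1 assms(3) in blast)+
  next
    case 2 show ?thesis by (rule ex1I[where a=e2]) (use a 2 assms(4) in blast)+
  qed
qed


definition "FragV i = {(4*int i,0), (4*int i,1), (4*int i+1,(-1)), (4*int i+2,(-1)), (4*int i+3,(-1)), (4*int i+1,0), (4*int i+2,0), (4*int i+3,0), (4*int i+1,1), (4*int i+2,1), (4*int i+3,1), (4*int i+1,2), (4*int i+2,2), (4*int i+3,2), (4*int i+4,0), (4*int i+4,1)}"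
lemma hex_vertices_eq: "hex_vertices (x,y) = {(x,y),(x+1,y),(x+2,y),(x,y+1),(x+1,y+1),(x+2,y+1)}"
  unfolding hex_vertices_def by simp

lemma FragV_eq: "FragV i = hex_vertices (2*int (2*i),0) \<union> hex_vertices (2*int (2*i+1),0) \<union> hex_vertices (4*int i+1,1) \<union> hex_vertices (4*int i+1,-1)"
proof -
  have 1: "2*int (2*i) = 4*int i" "2*int (2*i+1) = 4*int i + 2" by auto
  show ?thesis unfolding 1 hex_vertices_eq FragV_def
    by (auto simp: algebra_simps)
qed

lemma V_eq: "pyrene_V n = (\<Union>i<n. FragV i)"
  unfolding pyrene_V_def hex_eq UN_Un image_image FragV_eq lt2n UN_Un_distrib by blast

lemma FragV_sub: "i < n \<Longrightarrow> FragV i \<subseteq> pyrene_V n"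
  unfolding V_eq by blast

lemma Frag_sub_FragV: "e \<in> Frag i \<Longrightarrow> e \<subseteq> FragV i"
  unfolding Frag_split edefs' FragV_def by (elim disjE; simp)

lemma EV: "\<Union>(pyrene_E n) \<subseteq> pyrene_V n"
proof
  fix v assume "v \<in> \<Union>(pyrene_E n)"
  then obtain e where e: "e \<in> pyrene_E n" "v \<in> e" by blast
  then obtain i where i: "i < n" "e \<in> Frag i" unfolding E_iff2 by blast
  have "v \<in> FragV i" using Frag_sub_FragV[OF i(2)] e(2) by blast
  then show "v \<in> pyrene_V n" using FragV_sub[OF i(1)] by blast
qed

lemma E_ne: "{} \<notin> pyrene_E n"
  unfolding E_iff2 Frag_split edefs' by auto

lemma PnV: assumes "1 \<le> n" shows "(4*int n, 0) \<in> pyrene_V n" "(4*int n, 1) \<in> pyrene_V n"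
proof -
  obtain m where m: "n = Suc m" using assms by (cases n) auto
  have "(4*int m+4,0) \<in> FragV m" "(4*int m+4,1) \<in> FragV m" unfolding FragV_def by simp_all
  moreover have "4*int m + 4 = 4*int n" using m by simp
  ultimately show "(4*int n, 0) \<in> pyrene_V n" "(4*int n, 1) \<in> pyrene_V n" using FragV_sub[of m n] m by auto
qed


definition "FC M i \<longleftrightarrow> one3 (e_l0 i \<in> M) (e_v0 i \<in> M) (e_r0 i \<in> M) \<and>
  one3 (e_l1 i \<in> M) (e_v0 i \<in> M) (e_r1 i \<in> M) \<and>
  one2 (e_a12 i \<in> M) (e_ab1 i \<in> M) \<and>
  one2 (e_a12 i \<in> M) (e_a23 i \<in> M) \<and>
  one2 (e_a23 i \<in> M) (e_ab3 i \<in> M) \<and>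
  one3 (e_r0 i \<in> M) (e_b12 i \<in> M) (e_ab1 i \<in> M) \<and>
  one3 (e_b12 i \<in> M) (e_b23 i \<in> M) (e_bc2 i \<in> M) \<and>
  one3 (e_b23 i \<in> M) (e_ab3 i \<in> M) (e_R0 i \<in> M) \<and>
  one3 (e_r1 i \<in> M) (e_c12 i \<in> M) (e_cd1 i \<in> M) \<and>
  one3 (e_c12 i \<in> M) (e_c23 i \<in> M) (e_bc2 i \<in> M) \<and>
  one3 (e_c23 i \<in> M) (e_cd3 i \<in> M) (e_R1 i \<in> M) \<and>
  one2 (e_d12 i \<in> M) (e_cd1 i \<in> M) \<and>
  one2 (e_d12 i \<in> M) (e_d23 i \<in> M) \<and>
  one2 (e_d23 i \<in> M) (e_cd3 i \<in> M)"
lemma frag_cons: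
  assumes pm: "perfect_matching (pyrene_V n) (pyrene_E n) M" and i: "i < n"
  shows "FC M i"
proof -
  have V: "FragV i \<subseteq> pyrene_V n" using FragV_sub[OF i] .
  have P0: "one3 (e_l0 i \<in> M) (e_v0 i \<in> M) (e_r0 i \<in> M)"
  proof (rule one3I[OF pm _ inc_P0])
    show "(4*int i,0) \<in> pyrene_V n" using V unfolding FragV_def by blast
  qed (simp_all add: edefs doubleton_eq_iff)
  have P1: "one3 (e_l1 i \<in> M) (e_v0 i \<in> M) (e_r1 i \<in> M)"
  proof (rule one3I[OF pm _ inc_P1])
    show "(4*int i,1) \<in> pyrene_V n" using V unfolding FragV_def by blast
  qed (simp_all add: edefs doubleton_eq_iff)
  have a1: "one2 (e_a12 i \<in> M) (e_ab1 i \<in> M)"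
  proof (rule one2I[OF pm _ inc_a1])
    show "(4*int i+1,(-1)) \<in> pyrene_V n" using V unfolding FragV_def by blast
  qed (simp_all add: edefs doubleton_eq_iff)
  have a2: "one2 (e_a12 i \<in> M) (e_a23 i \<in> M)"
  proof (rule one2I[OF pm _ inc_a2])
    show "(4*int i+2,(-1)) \<in> pyrene_V n" using V unfolding FragV_def by blast
  qed (simp_all add: edefs doubleton_eq_iff)
  have a3: "one2 (e_a23 i \<in> M) (e_ab3 i \<in> M)"
  proof (rule one2I[OF pm _ inc_a3])
    show "(4*int i+3,(-1)) \<in> pyrene_V n" using V unfolding FragV_def by blast
  qed (simp_all add: edefs doubleton_eq_iff)
  have b1: "one3 (e_r0 i \<in> M) (e_b12 i \<in> M) (e_ab1 i \<in> M)"
  proof (rule one3I[OF pm _ inc_b1])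
    show "(4*int i+1,0) \<in> pyrene_V n" using V unfolding FragV_def by blast
  qed (simp_all add: edefs doubleton_eq_iff)
  have b2: "one3 (e_b12 i \<in> M) (e_b23 i \<in> M) (e_bc2 i \<in> M)"
  proof (rule one3I[OF pm _ inc_b2])
    show "(4*int i+2,0) \<in> pyrene_V n" using V unfolding FragV_def by blast
  qed (simp_all add: edefs doubleton_eq_iff)
  have b3: "one3 (e_b23 i \<in> M) (e_ab3 i \<in> M) (e_R0 i \<in> M)"
  proof (rule one3I[OF pm _ inc_b3])
    show "(4*int i+3,0) \<in> pyrene_V n" using V unfolding FragV_def by blast
  qed (simp_all add: edefs doubleton_eq_iff)
  have c1: "one3 (e_r1 i \<in> M) (e_c12 i \<in> M) (e_cd1 i \<in> M)"
  proof (rule one3I[OF pm _ inc_c1])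
    show "(4*int i+1,1) \<in> pyrene_V n" using V unfolding FragV_def by blast
  qed (simp_all add: edefs doubleton_eq_iff)
  have c2: "one3 (e_c12 i \<in> M) (e_c23 i \<in> M) (e_bc2 i \<in> M)"
  proof (rule one3I[OF pm _ inc_c2])
    show "(4*int i+2,1) \<in> pyrene_V n" using V unfolding FragV_def by blast
  qed (simp_all add: edefs doubleton_eq_iff)
  have c3: "one3 (e_c23 i \<in> M) (e_cd3 i \<in> M) (e_R1 i \<in> M)"
  proof (rule one3I[OF pm _ inc_c3])
    show "(4*int i+3,1) \<in> pyrene_V n" using V unfolding FragV_def by blast
  qed (simp_all add: edefs doubleton_eq_iff)
  have d1: "one2 (e_d12 i \<in> M) (e_cd1 i \<in> M)"
  proof (rule one2I[OF pm _ inc_d1])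
    show "(4*int i+1,2) \<in> pyrene_V n" using V unfolding FragV_def by blast
  qed (simp_all add: edefs doubleton_eq_iff)
  have d2: "one2 (e_d12 i \<in> M) (e_d23 i \<in> M)"
  proof (rule one2I[OF pm _ inc_d2])
    show "(4*int i+2,2) \<in> pyrene_V n" using V unfolding FragV_def by blast
  qed (simp_all add: edefs doubleton_eq_iff)
  have d3: "one2 (e_d23 i \<in> M) (e_cd3 i \<in> M)"
  proof (rule one2I[OF pm _ inc_d3])
    show "(4*int i+3,2) \<in> pyrene_V n" using V unfolding FragV_def by blast
  qed (simp_all add: edefs doubleton_eq_iff)
  show ?thesis unfolding FC_def using P0 P1 a1 a2 a3 b1 b2 b3 c1 c2 c3 d1 d2 d3 by blast
qed

definition "Own i = {e_v0 i, e_r0 i, e_r1 i, e_a12 i, e_a23 i, e_b12 i, e_b23 i, e_c12 i, e_c23 i,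
  e_d12 i, e_d23 i, e_ab1 i, e_ab3 i, e_bc2 i, e_cd1 i, e_cd3 i, e_R0 i, e_R1 i}"

definition "C1 M M' i \<longleftrightarrow> (e_r0 i \<in> M \<longrightarrow> e_r0 i \<in> M') \<and> (e_b12 i \<in> M \<longrightarrow> e_b12 i \<in> M') \<and>
  (e_ab1 i \<in> M \<longrightarrow> e_ab1 i \<in> M') \<and> (e_c12 i \<in> M \<longrightarrow> e_c12 i \<in> M') \<and>
  (e_c23 i \<in> M \<longrightarrow> e_c23 i \<in> M') \<and> (e_bc2 i \<in> M \<longrightarrow> e_bc2 i \<in> M')"
definition "C2 M M' i \<longleftrightarrow> e_R0 i \<in> M \<and> e_R0 i \<in> M'"

lemma Frag_Own: "e \<in> Frag i \<Longrightarrow> e \<in> Own i \<or> e = e_v0 (Suc i)"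
  unfolding Frag_def Own_def by (auto simp: e_V4_def e_v0_def algebra_simps)

lemma FC_inv: "FC M i \<Longrightarrow> (e_l0 i \<in> M \<longleftrightarrow> e_l1 i \<in> M) \<Longrightarrow> (e_R0 i \<in> M \<longleftrightarrow> e_R1 i \<in> M)"
  unfolding FC_def one3_def one2_def by sat

lemma FC_alt: "FC M i \<Longrightarrow> (e_l0 i \<in> M \<longleftrightarrow> e_l1 i \<in> M) \<Longrightarrow>
   (e_a12 i \<in> M \<and> e_ab3 i \<in> M \<and> e_b12 i \<in> M) \<or> (e_a23 i \<in> M \<and> e_ab1 i \<in> M \<and> e_b23 i \<in> M) \<or>
   (e_r0 i \<in> M \<and> e_r1 i \<in> M \<and> e_bc2 i \<in> M) \<or> (e_R0 i \<in> M \<and> e_R1 i \<in> M \<and> e_bc2 i \<in> M)"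
  unfolding FC_def one3_def one2_def by sat

lemma FC_agree:
  assumes "FC M i" "FC M' i" "e_l0 i \<in> M \<longleftrightarrow> e_l1 i \<in> M" "e_l0 i \<in> M' \<longleftrightarrow> e_l1 i \<in> M'"
    "e_l0 i \<in> M \<longleftrightarrow> e_l0 i \<in> M'" "e_l1 i \<in> M \<longleftrightarrow> e_l1 i \<in> M'" "C1 M M' i \<or> C2 M M' i"
  shows "\<forall>e\<in>Own i. e \<in> M \<longleftrightarrow> e \<in> M'"
  unfolding Own_def ball_simps
  apply (intro conjI)
  using assms unfolding FC_def one3_def one2_def C1_def C2_def by sat+

lemma PM_sub: "perfect_matching V E M \<Longrightarrow> M \<subseteq> E"
  unfolding perfect_matching_def by simp

lemma inv_all:
  assumes pm: "perfect_matching (pyrene_V n) (pyrene_E n) M"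
  shows "i \<le> n \<Longrightarrow> (e_l0 i \<in> M \<longleftrightarrow> e_l1 i \<in> M)"
proof (induction i)
  case 0
  have "e_l0 0 \<notin> M" "e_l1 0 \<notin> M" using PM_sub[OF pm] l0_0 l1_0 by auto
  then show ?case by simp
next
  case (Suc i)
  then have i: "i < n" by simp
  have "e_R0 i \<in> M \<longleftrightarrow> e_R1 i \<in> M" using FC_inv[OF frag_cons[OF pm i]] Suc by simp
  then show ?case by (simp add: l0_Suc l1_Suc)
qed

lemma E_upper: assumes "e \<in> pyrene_E n" "u \<in> e" shows "fst u \<le> 4 * int n"
proof -
  obtain ia where ia: "ia < n" "e \<in> Frag ia" using assms unfolding E_iff2 by blast
  have "fst u \<le> 4 * int ia + 4" using ia(2) assms(2) unfolding Frag_split edefs' by (elim disjE; auto)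
  then show ?thesis using ia(1) by linarith
qed

lemma r0n: "e_r0 n \<notin> pyrene_E n"
  using E_upper[of "e_r0 n" n "(4*int n+1,0)"] unfolding e_r0_def by auto

lemma agree_eq:
  assumes pm: "perfect_matching (pyrene_V n) (pyrene_E n) M"
    and pm': "perfect_matching (pyrene_V n) (pyrene_E n) M'"
    and n: "1 \<le> n"
    and C: "\<And>i. i < n \<Longrightarrow> C1 M M' i \<or> C2 M M' i"
  shows "M' = M"
proof -
  have L: "i \<le> n \<Longrightarrow> (e_l0 i \<in> M \<longleftrightarrow> e_l0 i \<in> M') \<and> (e_l1 i \<in> M \<longleftrightarrow> e_l1 i \<in> M')" for i
  proof (induction i)
    case 0
    have "e_l0 0 \<notin> M" "e_l1 0 \<notin> M" "e_l0 0 \<notin> M'" "e_l1 0 \<notin> M'"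
      using PM_sub[OF pm] PM_sub[OF pm'] l0_0 l1_0 by auto
    then show ?case by simp
  next
    case (Suc i)
    then have i: "i < n" by simp
    have "\<forall>e\<in>Own i. e \<in> M \<longleftrightarrow> e \<in> M'"
      using FC_agree[OF frag_cons[OF pm i] frag_cons[OF pm' i] inv_all[OF pm] inv_all[OF pm'] _ _ C[OF i]] Suc i by simp
    then show ?case unfolding l0_Suc l1_Suc Own_def by simp
  qed
  have O: "e \<in> M \<longleftrightarrow> e \<in> M'" if "i < n" "e \<in> Own i" for i e
    using FC_agree[OF frag_cons[OF pm that(1)] frag_cons[OF pm' that(1)] inv_all[OF pm] inv_all[OF pm'] _ _ C[OF that(1)]]
      L[of i] that by simp
  have vn: "e_v0 n \<in> M \<longleftrightarrow> e_v0 n \<in> M'"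
  proof -
    have o: "one3 (e_l0 n \<in> X) (e_v0 n \<in> X) (e_r0 n \<in> X)" if "perfect_matching (pyrene_V n) (pyrene_E n) X" for X
    proof (rule one3I[OF that _ inc_P0])
      show "(4 * int n, 0) \<in> pyrene_V n" using PnV[OF n] by simp
    qed (simp_all add: edefs doubleton_eq_iff)
    have "e_r0 n \<notin> M" "e_r0 n \<notin> M'" using r0n PM_sub[OF pm] PM_sub[OF pm'] by auto
    then show ?thesis using o[OF pm] o[OF pm'] L[of n] unfolding one3_def by auto
  qed
  have all: "e \<in> M \<longleftrightarrow> e \<in> M'" if eE: "e \<in> pyrene_E n" for e
  proof -
    obtain i where i: "i < n" "e \<in> Frag i" using eE unfolding E_iff2 by blast
    from Frag_Own[OF i(2)] show ?thesis
    proof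
      assume "e \<in> Own i" then show ?thesis using O i(1) by blast
    next
      assume e: "e = e_v0 (Suc i)"
      show ?thesis
      proof (cases "Suc i < n")
        case True
        have "e \<in> Own (Suc i)" unfolding e Own_def by simp
        then show ?thesis using O True by blast
      next
        case False
        then have "Suc i = n" using i by simp
        then show ?thesis using vn e by simp
      qed
    qed
  qed
  show ?thesis using all PM_sub[OF pm] PM_sub[OF pm'] by blast
qed

lemma ex1_three: "a \<noteq> b \<Longrightarrow> a \<noteq> c \<Longrightarrow> b \<noteq> c \<Longrightarrow> (\<exists>!d. d \<in> {a,b,c} \<and> P d) \<longleftrightarrow> one3 (P a) (P b) (P c)"
  unfolding one3_def by auto

lemma swap:
  assumes pm: "perfect_matching V E M" and CM: "C \<subseteq> M" and DE: "D \<subseteq> E"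
    and CD: "\<Union>C = \<Union>D" and uD: "\<And>v. v \<in> \<Union>D \<Longrightarrow> \<exists>!d. d \<in> D \<and> v \<in> d"
    and disj: "C \<inter> D = {}" and ne: "D \<noteq> {}" "{} \<notin> D" and EV: "\<Union>E \<subseteq> V"
  shows "perfect_matching V E ((M - C) \<union> D) \<and> (M - C) \<union> D \<noteq> M"
proof -
  from pm have ME: "M \<subseteq> E" and u: "\<And>v. v \<in> V \<Longrightarrow> \<exists>!e. e \<in> M \<and> v \<in> e" unfolding perfect_matching_def by auto
  have key: "e \<in> C" if "e \<in> M" "v \<in> e" "v \<in> \<Union>D" "v \<in> V" for e v
  proof -
    from that(3) CD obtain c where c: "c \<in> C" "v \<in> c" by auto
    then have "c \<in> M" using CM by auto
    then have "c = e" using u[OF that(4)] c that(1,2) by blast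
    then show ?thesis using c by simp
  qed
  have pm2: "perfect_matching V E ((M - C) \<union> D)"
    unfolding perfect_matching_def
  proof (intro conjI ballI)
    show "M - C \<union> D \<subseteq> E" using ME DE by auto
  next
    fix v assume v: "v \<in> V"
    show "\<exists>!e. e \<in> M - C \<union> D \<and> v \<in> e"
    proof (cases "v \<in> \<Union>D")
      case True
      then have "\<exists>!d. d \<in> D \<and> v \<in> d" using uD by blast
      moreover have "\<not> (e \<in> M - C \<and> v \<in> e)" for e using key[OF _ _ True v] by blast
      ultimately show ?thesis by blast
    next
      case False
      then have nD: "\<not> (d \<in> D \<and> v \<in> d)" for d by blast
      have nC: "\<not> (c \<in> C \<and> v \<in> c)" for c using False CD by blast
      have "\<exists>!e. e \<in> M \<and> v \<in> e" using u[OF v] .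
      then show ?thesis using nD nC by blast
    qed
  qed
  have "(M - C) \<union> D \<noteq> M"
  proof
    assume eq: "(M - C) \<union> D = M"
    from ne obtain d where d: "d \<in> D" "d \<noteq> {}" by auto
    then obtain v where "v \<in> d" by auto
    have "d \<in> M" using eq d by auto
    have "v \<in> V" using EV DE d \<open>v \<in> d\<close> by blast
    have "v \<in> \<Union>D" using d \<open>v \<in> d\<close> by blast
    have "d \<in> C" using key[OF \<open>d \<in> M\<close> \<open>v \<in> d\<close> \<open>v \<in> \<Union>D\<close> \<open>v \<in> V\<close>] .
    then show False using d disj by blast
  qed
  show ?thesis using pm2 \<open>(M - C) \<union> D \<noteq> M\<close> by blast
qed

lemma hex_swap:
  assumes pm: "perfect_matching V E M" and EV: "\<Union>E \<subseteq> V"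
    and dist: "distinct [p1,p2,p3,p4,p5,p6]"
    and M: "{p1,p2} \<in> M" "{p3,p4} \<in> M" "{p5,p6} \<in> M"
    and E: "{p2,p3} \<in> E" "{p4,p5} \<in> E" "{p6,p1} \<in> E"
  shows "\<exists>M'. perfect_matching V E M' \<and> M' \<noteq> M \<and> M - {{p1,p2},{p3,p4},{p5,p6}} \<subseteq> M'"
proof -
  let ?C = "{{p1,p2},{p3,p4},{p5,p6}}" and ?D = "{{p2,p3},{p4,p5},{p6,p1}}"
  have "perfect_matching V E ((M - ?C) \<union> ?D) \<and> (M - ?C) \<union> ?D \<noteq> M"
  proof (rule swap[OF pm _ _ _ _ _ _ _ EV])
    show "?C \<subseteq> M" using M by auto
    show "?D \<subseteq> E" using E by auto
    show "\<Union>?C = \<Union>?D" by auto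
    have d3: "{p2,p3} \<noteq> {p4,p5}" "{p2,p3} \<noteq> {p6,p1}" "{p4,p5} \<noteq> {p6,p1}"
      using dist by (auto simp: doubleton_eq_iff)
    show "\<exists>!d. d \<in> ?D \<and> v \<in> d" if "v \<in> \<Union>?D" for v
    proof -
      have "v = p1 \<or> v = p2 \<or> v = p3 \<or> v = p4 \<or> v = p5 \<or> v = p6" using that by auto
      then have "one3 (v \<in> {p2,p3}) (v \<in> {p4,p5}) (v \<in> {p6,p1})"
        using dist by (elim disjE; simp add: one3_def; blast)
      then show ?thesis unfolding ex1_three[OF d3] .
    qed
    show "?C \<inter> ?D = {}" using dist by (auto simp: doubleton_eq_iff)
    show "?D \<noteq> {}" by auto
    show "{} \<notin> ?D" by auto
  qed
  then show ?thesis by blast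
qed

lemma hex_swap2:
  assumes pm: "perfect_matching V E M" and EV: "\<Union>E \<subseteq> V"
    and dist: "distinct [p1,p2,p3,p4,p5,p6]"
    and c: "c1 = {p1,p2}" "c2 = {p3,p4}" "c3 = {p5,p6}"
    and d: "d1 = {p2,p3}" "d2 = {p4,p5}" "d3 = {p6,p1}"
    and M: "c1 \<in> M" "c2 \<in> M" "c3 \<in> M"
    and E: "d1 \<in> E" "d2 \<in> E" "d3 \<in> E"
  shows "\<exists>M'. perfect_matching V E M' \<and> M' \<noteq> M \<and> M - {c1,c2,c3} \<subseteq> M'"
  using hex_swap[OF pm EV dist] M E unfolding c d by blast

lemma ex1_uniq: "\<exists>!x. P x \<Longrightarrow> P a \<Longrightarrow> P b \<Longrightarrow> a = b" by blast

lemma PM_D: assumes "perfect_matching V E M"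
  shows "M \<subseteq> E" "\<And>v. v \<in> V \<Longrightarrow> \<exists>!e. e \<in> M \<and> v \<in> e"
  using assms unfolding perfect_matching_def by auto

lemma forcing_exists:
  assumes pm: "perfect_matching V E M" and EV: "\<Union>E \<subseteq> V" and ne: "{} \<notin> E"
  shows "forcing_set V E M M"
  unfolding forcing_set_def
proof (intro conjI allI impI)
  show "M \<subseteq> M" by simp
next
  fix M' assume a: "perfect_matching V E M' \<and> M \<subseteq> M'"
  then have pm': "perfect_matching V E M'" and MM: "M \<subseteq> M'" by simp_all
  show "M' = M"
  proof
    show "M' \<subseteq> M"
    proof
      fix e assume e: "e \<in> M'"
      have "e \<in> E" using PM_D(1)[OF pm'] e by (rule subsetD)
      then have "e \<noteq> {}" using ne by metis
      then obtain v where v: "v \<in> e" by (metis all_not_in_conv)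
      have vV: "v \<in> V" using EV \<open>e \<in> E\<close> v by blast
      obtain f where f: "f \<in> M" "v \<in> f" using ex1_implies_ex[OF PM_D(2)[OF pm vV]] by (elim exE conjE)
      have "f \<in> M'" using f(1) MM by (rule subsetD[rotated])
      have "f = e" using ex1_uniq[OF PM_D(2)[OF pm' vV], of f e] \<open>f \<in> M'\<close> f(2) e v by simp
      then show "e \<in> M" using f by simp
    qed
  qed (rule MM)
qed

lemma fn_upper:
  assumes "forcing_set V E M S" "finite S"
  shows "forcing_number V E M \<le> card S"
  unfolding forcing_number_def by (rule Least_le) (use assms in blast)

lemma forcing_setD: "forcing_set V E M S \<Longrightarrow> S \<subseteq> M"
  "forcing_set V E M S \<Longrightarrow> perfect_matching V E M' \<Longrightarrow> S \<subseteq> M' \<Longrightarrow> M' = M"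
  unfolding forcing_set_def by auto

lemma fn_lower:
  assumes pm: "perfect_matching V E M" and ex: "forcing_set V E M M" "finite M"
    and I: "finite I" and AM: "\<And>t. t \<in> I \<Longrightarrow> A t \<subseteq> M"
    and alt: "\<And>t. t \<in> I \<Longrightarrow> \<exists>M'. perfect_matching V E M' \<and> M' \<noteq> M \<and> M - A t \<subseteq> M'"
    and disj: "\<And>s t. s \<in> I \<Longrightarrow> t \<in> I \<Longrightarrow> s \<noteq> t \<Longrightarrow> A s \<inter> A t = {}"
  shows "card I \<le> forcing_number V E M"
proof -
  let ?P = "\<lambda>k. \<exists>S. forcing_set V E M S \<and> finite S \<and> card S = k"
  have "?P (card M)" using ex by (intro exI[of _ M]) simp
  then have "?P (Least ?P)" by (rule LeastI)
  then obtain S where S: "forcing_set V E M S" "finite S" "card S = Least ?P"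
    by (elim exE conjE)
  have S3: "card S = forcing_number V E M" unfolding forcing_number_def by (rule S(3))
  have SM: "S \<subseteq> M" by (rule forcing_setD(1)[OF S(1)])
  have hit: "S \<inter> A t \<noteq> {}" if t: "t \<in> I" for t
  proof
    assume e: "S \<inter> A t = {}"
    obtain M' where M': "perfect_matching V E M'" "M' \<noteq> M" "M - A t \<subseteq> M'" using alt[OF t] by (elim exE conjE)
    have "S \<subseteq> M'" using SM e M'(3) by blast
    then have "M' = M" by (rule forcing_setD(2)[OF S(1) M'(1)])
    then show False using M'(2) by simp
  qed
  define f where "f t = (SOME e. e \<in> S \<inter> A t)" for t
  have f: "f t \<in> S \<inter> A t" if "t \<in> I" for t
  proof -
    have "\<exists>x. x \<in> S \<inter> A t" unfolding ex_in_conv by (rule hit[OF that])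
    then show ?thesis unfolding f_def by (rule someI_ex)
  qed
  have "inj_on f I"
  proof (rule inj_onI)
    fix s t assume st: "s \<in> I" "t \<in> I" "f s = f t"
    show "s = t"
    proof (rule ccontr)
      assume "s \<noteq> t"
      then have "A s \<inter> A t = {}" using disj st(1,2) by simp
      moreover have "f s \<in> A s" "f t \<in> A t" using f st(1,2) by auto
      ultimately show False using st(3) by auto
    qed
  qed
  then have "card I = card (f ` I)" by (simp add: card_image)
  also have "\<dots> \<le> card S" using f S(2) by (intro card_mono) auto
  finally show ?thesis using S3 by simp
qed


lemma Frag_E: "i < n \<Longrightarrow> e \<in> Frag i \<Longrightarrow> e \<in> pyrene_E n"
  unfolding E_iff2 by blast

lemma finite_E: "finite (pyrene_E n)"
  unfolding E_eq by (rule finite_UN_I) (simp_all add: Frag_def)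

lemma alt_bot1:
  assumes pm: "perfect_matching (pyrene_V n) (pyrene_E n) M" and i: "i < n"
    and M: "e_a12 i \<in> M" "e_ab3 i \<in> M" "e_b12 i \<in> M"
  shows "\<exists>M'. perfect_matching (pyrene_V n) (pyrene_E n) M' \<and> M' \<noteq> M \<and> M - {e_a12 i, e_ab3 i, e_b12 i} \<subseteq> M'"
proof -
  have E: "e_a23 i \<in> pyrene_E n" "e_b23 i \<in> pyrene_E n" "e_ab1 i \<in> pyrene_E n"
    using Frag_E[OF i] unfolding Frag_def by auto
  show ?thesis
  proof (rule hex_swap2[OF pm EV _ _ _ _ _ _ _ M E])
    show "distinct [(4*int i+1,-1)::int\<times>int, (4*int i+2,-1), (4*int i+3,-1), (4*int i+3,0), (4*int i+2,0), (4*int i+1,0)]" by simp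
  qed (simp_all add: edefs insert_commute)
qed

lemma alt_bot2:
  assumes pm: "perfect_matching (pyrene_V n) (pyrene_E n) M" and i: "i < n"
    and M: "e_a23 i \<in> M" "e_b23 i \<in> M" "e_ab1 i \<in> M"
  shows "\<exists>M'. perfect_matching (pyrene_V n) (pyrene_E n) M' \<and> M' \<noteq> M \<and> M - {e_a23 i, e_b23 i, e_ab1 i} \<subseteq> M'"
proof -
  have E: "e_ab3 i \<in> pyrene_E n" "e_b12 i \<in> pyrene_E n" "e_a12 i \<in> pyrene_E n"
    using Frag_E[OF i] unfolding Frag_def by auto
  show ?thesis
  proof (rule hex_swap2[OF pm EV _ _ _ _ _ _ _ M E])
    show "distinct [(4*int i+2,-1)::int\<times>int, (4*int i+3,-1), (4*int i+3,0), (4*int i+2,0), (4*int i+1,0), (4*int i+1,-1)]" by simp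
  qed (simp_all add: edefs insert_commute)
qed

lemma alt_h1:
  assumes pm: "perfect_matching (pyrene_V n) (pyrene_E n) M" and i: "i < n"
    and M: "e_r0 i \<in> M" "e_bc2 i \<in> M" "e_r1 i \<in> M"
  shows "\<exists>M'. perfect_matching (pyrene_V n) (pyrene_E n) M' \<and> M' \<noteq> M \<and> M - {e_r0 i, e_bc2 i, e_r1 i} \<subseteq> M'"
proof -
  have E: "e_b12 i \<in> pyrene_E n" "e_c12 i \<in> pyrene_E n" "e_v0 i \<in> pyrene_E n"
    using Frag_E[OF i] unfolding Frag_def by auto
  show ?thesis
  proof (rule hex_swap2[OF pm EV _ _ _ _ _ _ _ M E])
    show "distinct [(4*int i,0)::int\<times>int, (4*int i+1,0), (4*int i+2,0), (4*int i+2,1), (4*int i+1,1), (4*int i,1)]" by simp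
  qed (simp_all add: edefs insert_commute)
qed

lemma alt_h2:
  assumes pm: "perfect_matching (pyrene_V n) (pyrene_E n) M" and i: "i < n"
    and M: "e_R0 i \<in> M" "e_R1 i \<in> M" "e_bc2 i \<in> M"
  shows "\<exists>M'. perfect_matching (pyrene_V n) (pyrene_E n) M' \<and> M' \<noteq> M \<and> M - {e_R0 i, e_R1 i, e_bc2 i} \<subseteq> M'"
proof -
  have E: "e_V4 i \<in> pyrene_E n" "e_c23 i \<in> pyrene_E n" "e_b23 i \<in> pyrene_E n"
    using Frag_E[OF i] unfolding Frag_def by auto
  show ?thesis
  proof (rule hex_swap2[OF pm EV _ _ _ _ _ _ _ M E])
    show "distinct [(4*int i+3,0)::int\<times>int, (4*int i+4,0), (4*int i+4,1), (4*int i+3,1), (4*int i+2,1), (4*int i+2,0)]" by simp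
  qed (simp_all add: edefs insert_commute)
qed

lemma alt_top:
  assumes pm: "perfect_matching (pyrene_V n) (pyrene_E n) M" and i: "i < n"
    and M: "e_c12 i \<in> M" "e_cd3 i \<in> M" "e_d12 i \<in> M"
  shows "\<exists>M'. perfect_matching (pyrene_V n) (pyrene_E n) M' \<and> M' \<noteq> M \<and> M - {e_c12 i, e_cd3 i, e_d12 i} \<subseteq> M'"
proof -
  have E: "e_c23 i \<in> pyrene_E n" "e_d23 i \<in> pyrene_E n" "e_cd1 i \<in> pyrene_E n"
    using Frag_E[OF i] unfolding Frag_def by auto
  show ?thesis
  proof (rule hex_swap2[OF pm EV _ _ _ _ _ _ _ M E])
    show "distinct [(4*int i+1,1)::int\<times>int, (4*int i+2,1), (4*int i+3,1), (4*int i+3,2), (4*int i+2,2), (4*int i+1,2)]" by simp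
  qed (simp_all add: edefs insert_commute)
qed

definition "K i = {e_r0 i, e_r1 i, e_a12 i, e_a23 i, e_b12 i, e_b23 i, e_c12 i, e_c23 i,
  e_d12 i, e_d23 i, e_ab1 i, e_ab3 i, e_bc2 i, e_cd1 i, e_cd3 i, e_R0 i, e_R1 i}"

lemma K_key: assumes "e \<in> K i"
  shows "(\<exists>u\<in>e. 4*int i+1 \<le> fst u \<and> fst u \<le> 4*int i+3) \<and> (\<forall>u\<in>e. 4*int i \<le> fst u \<and> fst u \<le> 4*int i+4)"
  using assms unfolding K_def insert_iff empty_iff simp_thms edefs' by (elim disjE; simp)

lemma K_disj: assumes "i \<noteq> i'" shows "K i \<inter> K i' = {}"
proof (rule ccontr)
  assume "K i \<inter> K i' \<noteq> {}"
  then obtain e where e: "e \<in> K i" "e \<in> K i'" by blast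
  show False
  proof (cases "i < i'")
    case True
    obtain u where "u \<in> e" "4*int i'+1 \<le> fst u" using K_key[OF e(2)] by blast
    moreover have "fst u \<le> 4*int i+4" using K_key[OF e(1)] \<open>u \<in> e\<close> by blast
    ultimately show False using True by linarith
  next
    case False
    then have "i' < i" using assms by simp
    obtain u where "u \<in> e" "4*int i+1 \<le> fst u" using K_key[OF e(1)] by blast
    moreover have "fst u \<le> 4*int i'+4" using K_key[OF e(2)] \<open>u \<in> e\<close> by blast
    ultimately show False using \<open>i' < i\<close> by linarith
  qed
qed

definition "Aset M i = (if e_a12 i \<in> M \<and> e_ab3 i \<in> M \<and> e_b12 i \<in> M then {e_a12 i, e_ab3 i, e_b12 i}
  else if e_a23 i \<in> M \<and> e_b23 i \<in> M \<and> e_ab1 i \<in> M then {e_a23 i, e_b23 i, e_ab1 i}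
  else if e_r0 i \<in> M \<and> e_bc2 i \<in> M \<and> e_r1 i \<in> M then {e_r0 i, e_bc2 i, e_r1 i}
  else {e_R0 i, e_R1 i, e_bc2 i})"

lemma lower_n:
  assumes pm: "perfect_matching (pyrene_V n) (pyrene_E n) M"
  shows "n \<le> forcing_number (pyrene_V n) (pyrene_E n) M"
proof -
  have fin: "finite M" using finite_subset[OF PM_sub[OF pm] finite_E] .
  have alt: "(e_a12 i \<in> M \<and> e_ab3 i \<in> M \<and> e_b12 i \<in> M) \<or> (e_a23 i \<in> M \<and> e_ab1 i \<in> M \<and> e_b23 i \<in> M) \<or>
   (e_r0 i \<in> M \<and> e_r1 i \<in> M \<and> e_bc2 i \<in> M) \<or> (e_R0 i \<in> M \<and> e_R1 i \<in> M \<and> e_bc2 i \<in> M)" if "i < n" for i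
    using FC_alt[OF frag_cons[OF pm that] inv_all[OF pm]] that by simp
  have "card {..<n} \<le> forcing_number (pyrene_V n) (pyrene_E n) M"
  proof (rule fn_lower[OF pm forcing_exists[OF pm EV E_ne] fin, where A = "Aset M"])
    show "finite {..<n}" by simp
    show "Aset M t \<subseteq> M" if "t \<in> {..<n}" for t
    proof -
      have t: "t < n" using that by simp
      show ?thesis using alt[OF t] unfolding Aset_def by (simp split: if_splits; blast)
    qed
    show "\<exists>M'. perfect_matching (pyrene_V n) (pyrene_E n) M' \<and> M' \<noteq> M \<and> M - Aset M t \<subseteq> M'"
      if "t \<in> {..<n}" for t
    proof -
      have t: "t < n" using that by simp
      consider (a) "e_a12 t \<in> M \<and> e_ab3 t \<in> M \<and> e_b12 t \<in> M"
        | (b) "\<not>(e_a12 t \<in> M \<and> e_ab3 t \<in> M \<and> e_b12 t \<in> M)" "e_a23 t \<in> M \<and> e_b23 t \<in> M \<and> e_ab1 t \<in> M"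
        | (c) "\<not>(e_a12 t \<in> M \<and> e_ab3 t \<in> M \<and> e_b12 t \<in> M)" "\<not>(e_a23 t \<in> M \<and> e_b23 t \<in> M \<and> e_ab1 t \<in> M)"
              "e_r0 t \<in> M \<and> e_bc2 t \<in> M \<and> e_r1 t \<in> M"
        | (d) "\<not>(e_a12 t \<in> M \<and> e_ab3 t \<in> M \<and> e_b12 t \<in> M)" "\<not>(e_a23 t \<in> M \<and> e_b23 t \<in> M \<and> e_ab1 t \<in> M)"
              "\<not>(e_r0 t \<in> M \<and> e_bc2 t \<in> M \<and> e_r1 t \<in> M)" "e_R0 t \<in> M \<and> e_R1 t \<in> M \<and> e_bc2 t \<in> M"
        using alt[OF t] by blast
      then show ?thesis
      proof cases
        case a then show ?thesis unfolding Aset_def if_P[OF a] using alt_bot1[OF pm t] by blast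
      next
        case b then show ?thesis unfolding Aset_def if_not_P[OF b(1)] if_P[OF b(2)] using alt_bot2[OF pm t] by blast
      next
        case c then show ?thesis unfolding Aset_def if_not_P[OF c(1)] if_not_P[OF c(2)] if_P[OF c(3)] using alt_h1[OF pm t] by blast
      next
        case d then show ?thesis unfolding Aset_def if_not_P[OF d(1)] if_not_P[OF d(2)] if_not_P[OF d(3)] using alt_h2[OF pm t] d(4) by blast
      qed
    qed
    show "Aset M s \<inter> Aset M t = {}" if "s \<in> {..<n}" "t \<in> {..<n}" "s \<noteq> t" for s t
    proof -
      have "Aset M s \<subseteq> K s" "Aset M t \<subseteq> K t" unfolding Aset_def K_def by simp_all
      then show ?thesis using K_disj[OF that(3)] by blast
    qed
  qed
  then show ?thesis by simp
qed

definition "edge_at M v = (THE e. e \<in> M \<and> v \<in> e)"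

lemma edge_at:
  assumes pm: "perfect_matching V E M" and v: "v \<in> V"
  shows "edge_at M v \<in> M" "v \<in> edge_at M v" "e \<in> M \<Longrightarrow> v \<in> e \<Longrightarrow> edge_at M v = e"
proof -
  have u: "\<exists>!e. e \<in> M \<and> v \<in> e" using pm v unfolding perfect_matching_def by blast
  show "edge_at M v \<in> M" "v \<in> edge_at M v" using theI'[OF u] unfolding edge_at_def by auto
  show "e \<in> M \<Longrightarrow> v \<in> e \<Longrightarrow> edge_at M v = e" using the1_equality[OF u] unfolding edge_at_def by auto
qed

lemma upper_2n:
  assumes pm: "perfect_matching (pyrene_V n) (pyrene_E n) M" and n: "1 \<le> n"
  shows "forcing_number (pyrene_V n) (pyrene_E n) M \<le> 2 * n"
proof -
  define S where "S = (\<lambda>i. edge_at M (4*int i+1,0)) ` {..<n} \<union> (\<lambda>i. edge_at M (4*int i+2,1)) ` {..<n}"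
  have bV: "(4*int i+1,0) \<in> pyrene_V n" "(4*int i+2,1) \<in> pyrene_V n" if "i < n" for i
    using FragV_sub[OF that] unfolding FragV_def by auto
  have SM: "S \<subseteq> M" unfolding S_def using edge_at(1)[OF pm bV(1)] edge_at(1)[OF pm bV(2)] by auto
  have fin: "finite S" unfolding S_def by simp
  have card: "card S \<le> 2 * n"
  proof -
    have "card S \<le> card ((\<lambda>i. edge_at M (4*int i+1,0)) ` {..<n}) + card ((\<lambda>i. edge_at M (4*int i+2,1)) ` {..<n})"
      unfolding S_def by (rule card_Un_le)
    also have "\<dots> \<le> card {..<n} + card {..<n}" by (intro add_mono card_image_le) auto
    finally show ?thesis by simp
  qed
  have fs: "forcing_set (pyrene_V n) (pyrene_E n) M S"
    unfolding forcing_set_def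
  proof (intro conjI allI impI)
    show "S \<subseteq> M" by (rule SM)
    fix M' assume a: "perfect_matching (pyrene_V n) (pyrene_E n) M' \<and> S \<subseteq> M'"
    show "M' = M"
    proof (rule agree_eq[OF pm _ n])
      show "perfect_matching (pyrene_V n) (pyrene_E n) M'" using a by blast
      fix i assume i: "i < n"
      have b1: "e \<in> M'" if "e \<in> M" "(4*int i+1,0) \<in> e" for e
      proof -
        have "edge_at M (4*int i+1,0) = e" using edge_at(3)[OF pm bV(1)[OF i] that] .
        moreover have "edge_at M (4*int i+1,0) \<in> S" unfolding S_def using i by blast
        ultimately show ?thesis using a by blast
      qed
      have c2: "e \<in> M'" if "e \<in> M" "(4*int i+2,1) \<in> e" for e
      proof -
        have "edge_at M (4*int i+2,1) = e" using edge_at(3)[OF pm bV(2)[OF i] that] .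
        moreover have "edge_at M (4*int i+2,1) \<in> S" unfolding S_def using i by blast
        ultimately show ?thesis using a by blast
      qed
      have "C1 M M' i" unfolding C1_def
        using b1[of "e_r0 i"] b1[of "e_b12 i"] b1[of "e_ab1 i"] c2[of "e_c12 i"] c2[of "e_c23 i"] c2[of "e_bc2 i"]
        by (simp add: edefs)
      then show "C1 M M' i \<or> C2 M M' i" by blast
    qed
  qed
  show ?thesis using fn_upper[OF fs fin] card by simp
qed

definition FM :: "nat \<Rightarrow> nat \<Rightarrow> (int \<times> int) set set" where
  "FM j i = (if i < j then {e_v0 i, e_a12 i, e_ab3 i, e_b12 i, e_d12 i, e_cd3 i, e_c12 i}
   else (if i = j then {e_v0 i} else {}) \<union> {e_R0 i, e_R1 i, e_a23 i, e_ab1 i, e_bc2 i, e_cd1 i, e_d23 i})"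

definition Mj :: "nat \<Rightarrow> nat \<Rightarrow> (int \<times> int) set set" where
  "Mj n j = (\<Union>i<n. FM j i) \<union> (if j = n then {e_v0 n} else {})"

lemma V4_eq: "e_V4 i = e_v0 (Suc i)" unfolding e_V4_def e_v0_def by (simp add: algebra_simps)

lemma v0_inj: "e_v0 a = e_v0 b \<longleftrightarrow> a = b" unfolding e_v0_def by (auto simp: doubleton_eq_iff)

lemma v0_notK: "e_v0 a \<notin> K b"
proof
  assume "e_v0 a \<in> K b"
  from K_key[OF this] obtain u where "u \<in> e_v0 a" "4*int b+1 \<le> fst u" "fst u \<le> 4*int b+3" by blast
  then have "4*int b+1 \<le> 4*int a" "4*int a \<le> 4*int b+3" unfolding e_v0_def by auto
  then show False by presburger
qed

lemma FM_sub: "FM j i \<subseteq> insert (e_v0 i) (K i)"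
  unfolding FM_def K_def by auto

lemma FM_Frag: "FM j i \<subseteq> Frag i"
  unfolding FM_def Frag_def by auto

lemma Mj_E: assumes "1 \<le> n" shows "Mj n j \<subseteq> pyrene_E n"
proof -
  have "FM j i \<subseteq> pyrene_E n" if "i < n" for i using FM_Frag Frag_E[OF that] by blast
  moreover have "e_v0 n \<in> pyrene_E n"
  proof -
    obtain m where m: "n = Suc m" using assms by (cases n) auto
    have "e_V4 m \<in> Frag m" unfolding Frag_def by simp
    then show ?thesis using Frag_E[of m n] m V4_eq by auto
  qed
  ultimately show ?thesis unfolding Mj_def by auto
qed

lemma Mj_K: assumes i: "i < n" and e: "e \<in> K i"
  shows "e \<in> Mj n j \<longleftrightarrow> e \<in> FM j i"
proof
  assume "e \<in> Mj n j"
  then consider (a) i' where "i' < n" "e \<in> FM j i'" | (b) "e = e_v0 n"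
    unfolding Mj_def by (auto split: if_splits)
  then show "e \<in> FM j i"
  proof cases
    case (a i')
    have "e \<in> K i'" using FM_sub[of j i'] a(2) e v0_notK[of i' i] by blast
    then have "i' = i" using K_disj[of i' i] e by blast
    then show ?thesis using a(2) by simp
  next
    case b then show ?thesis using v0_notK e by simp
  qed
next
  assume "e \<in> FM j i" then show "e \<in> Mj n j" unfolding Mj_def using i by blast
qed

lemma v0_FM: "e_v0 i \<in> FM j i' \<longleftrightarrow> i = i' \<and> i \<le> j"
proof
  assume a: "e_v0 i \<in> FM j i'"
  then have "e_v0 i = e_v0 i'" using FM_sub[of j i'] v0_notK[of i i'] by blast
  then have "i = i'" using v0_inj by blast
  moreover have "e_v0 i' \<notin> K i'" by (rule v0_notK)
  ultimately show "i = i' \<and> i \<le> j" using a unfolding FM_def K_def by (auto split: if_splits)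
next
  assume "i = i' \<and> i \<le> j" then show "e_v0 i \<in> FM j i'" unfolding FM_def by auto
qed

lemma Mj_v0: assumes "i \<le> n" "j \<le> n" shows "e_v0 i \<in> Mj n j \<longleftrightarrow> i \<le> j"
proof
  assume "e_v0 i \<in> Mj n j"
  then consider (a) i' where "i' < n" "e_v0 i \<in> FM j i'" | (b) "j = n" "e_v0 i = e_v0 n"
    unfolding Mj_def by (auto split: if_splits)
  then show "i \<le> j"
  proof cases
    case (a i') then show ?thesis using v0_FM by blast
  next
    case b then show ?thesis using v0_inj assms by auto
  qed
next
  assume ij: "i \<le> j"
  show "e_v0 i \<in> Mj n j"
  proof (cases "i < n")
    case True
    then have "e_v0 i \<in> FM j i" using v0_FM ij by blast
    then show ?thesis unfolding Mj_def using True by blast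
  next
    case False
    then have "i = n" "j = n" using assms ij by auto
    then show ?thesis unfolding Mj_def by simp
  qed
qed

lemma Mj_r0: "i < n \<Longrightarrow> e_r0 i \<in> Mj n j \<longleftrightarrow> False"
  by (subst Mj_K) (auto simp: K_def FM_def edefs' doubleton_eq_iff)
lemma Mj_r1: "i < n \<Longrightarrow> e_r1 i \<in> Mj n j \<longleftrightarrow> False"
  by (subst Mj_K) (auto simp: K_def FM_def edefs' doubleton_eq_iff)
lemma Mj_a12: "i < n \<Longrightarrow> e_a12 i \<in> Mj n j \<longleftrightarrow> i < j"
  by (subst Mj_K) (auto simp: K_def FM_def edefs' doubleton_eq_iff)
lemma Mj_a23: "i < n \<Longrightarrow> e_a23 i \<in> Mj n j \<longleftrightarrow> j \<le> i"
  by (subst Mj_K) (auto simp: K_def FM_def edefs' doubleton_eq_iff)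
lemma Mj_b12: "i < n \<Longrightarrow> e_b12 i \<in> Mj n j \<longleftrightarrow> i < j"
  by (subst Mj_K) (auto simp: K_def FM_def edefs' doubleton_eq_iff)
lemma Mj_b23: "i < n \<Longrightarrow> e_b23 i \<in> Mj n j \<longleftrightarrow> False"
  by (subst Mj_K) (auto simp: K_def FM_def edefs' doubleton_eq_iff)
lemma Mj_c12: "i < n \<Longrightarrow> e_c12 i \<in> Mj n j \<longleftrightarrow> i < j"
  by (subst Mj_K) (auto simp: K_def FM_def edefs' doubleton_eq_iff)
lemma Mj_c23: "i < n \<Longrightarrow> e_c23 i \<in> Mj n j \<longleftrightarrow> False"
  by (subst Mj_K) (auto simp: K_def FM_def edefs' doubleton_eq_iff)
lemma Mj_d12: "i < n \<Longrightarrow> e_d12 i \<in> Mj n j \<longleftrightarrow> i < j"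
  by (subst Mj_K) (auto simp: K_def FM_def edefs' doubleton_eq_iff)
lemma Mj_d23: "i < n \<Longrightarrow> e_d23 i \<in> Mj n j \<longleftrightarrow> j \<le> i"
  by (subst Mj_K) (auto simp: K_def FM_def edefs' doubleton_eq_iff)
lemma Mj_ab1: "i < n \<Longrightarrow> e_ab1 i \<in> Mj n j \<longleftrightarrow> j \<le> i"
  by (subst Mj_K) (auto simp: K_def FM_def edefs' doubleton_eq_iff)
lemma Mj_ab3: "i < n \<Longrightarrow> e_ab3 i \<in> Mj n j \<longleftrightarrow> i < j"
  by (subst Mj_K) (auto simp: K_def FM_def edefs' doubleton_eq_iff)
lemma Mj_bc2: "i < n \<Longrightarrow> e_bc2 i \<in> Mj n j \<longleftrightarrow> j \<le> i"
  by (subst Mj_K) (auto simp: K_def FM_def edefs' doubleton_eq_iff)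
lemma Mj_cd1: "i < n \<Longrightarrow> e_cd1 i \<in> Mj n j \<longleftrightarrow> j \<le> i"
  by (subst Mj_K) (auto simp: K_def FM_def edefs' doubleton_eq_iff)
lemma Mj_cd3: "i < n \<Longrightarrow> e_cd3 i \<in> Mj n j \<longleftrightarrow> i < j"
  by (subst Mj_K) (auto simp: K_def FM_def edefs' doubleton_eq_iff)
lemma Mj_R0: "i < n \<Longrightarrow> e_R0 i \<in> Mj n j \<longleftrightarrow> j \<le> i"
  by (subst Mj_K) (auto simp: K_def FM_def edefs' doubleton_eq_iff)
lemma Mj_R1: "i < n \<Longrightarrow> e_R1 i \<in> Mj n j \<longleftrightarrow> j \<le> i"
  by (subst Mj_K) (auto simp: K_def FM_def edefs' doubleton_eq_iff)

lemma P_ok: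
  assumes n: "1 \<le> n" and j: "j \<le> n" and k: "k \<le> n" and y: "y = 0 \<or> y = 1"
  shows "\<exists>!e. e \<in> Mj n j \<and> (4*int k, y) \<in> e"
proof -
  have l: "(if y = 0 then e_l0 k else e_l1 k) \<in> Mj n j \<longleftrightarrow> j < k"
  proof (cases k)
    case 0
    have "e_l0 0 \<notin> Mj n j" "e_l1 0 \<notin> Mj n j" using Mj_E[OF n] l0_0 l1_0 by auto
    then show ?thesis using 0 by simp
  next
    case (Suc m)
    then have m: "m < n" using k by simp
    show ?thesis using Suc Mj_R0[OF m, of j] Mj_R1[OF m, of j] by (simp add: l0_Suc l1_Suc less_Suc_eq_le)
  qed
  have r: "(if y = 0 then e_r0 k else e_r1 k) \<notin> Mj n j"
  proof (cases "k < n")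
    case True then show ?thesis using Mj_r0[OF True] Mj_r1[OF True] by simp
  next
    case False
    then have "k = n" using k by simp
    have "e_r1 n \<notin> pyrene_E n"
      using E_upper[of "e_r1 n" n "(4*int n+1,1)"] unfolding e_r1_def by auto
    then show ?thesis using r0n Mj_E[OF n] \<open>k = n\<close> by auto
  qed
  have v: "e_v0 k \<in> Mj n j \<longleftrightarrow> k \<le> j" by (rule Mj_v0[OF k j])
  show ?thesis
  proof (cases "y = 0")
    case True
    show ?thesis
    proof (rule ex1I3[OF Mj_E[OF n] inc_P0[of _ n k]])
      show "one3 (e_l0 k \<in> Mj n j) (e_v0 k \<in> Mj n j) (e_r0 k \<in> Mj n j)"
        using l r v True unfolding one3_def by auto
    qed (use True in \<open>simp_all add: e_l0_def e_v0_def e_r0_def\<close>)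
  next
    case False
    then have y1: "y = 1" using y by simp
    show ?thesis
    proof (rule ex1I3[OF Mj_E[OF n] inc_P1[of _ n k]])
      show "one3 (e_l1 k \<in> Mj n j) (e_v0 k \<in> Mj n j) (e_r1 k \<in> Mj n j)"
        using l r v y1 unfolding one3_def by auto
    qed (use y1 in \<open>simp_all add: e_l1_def e_v0_def e_r1_def\<close>)
  qed
qed

lemma ok_a1: assumes n: "1 \<le> n" and i: "i < n"
  shows "\<exists>!e. e \<in> Mj n j \<and> (4*int i+1,(-1)) \<in> e"
proof (rule ex1I2[OF Mj_E[OF n] inc_a1])
  show "one2 (e_a12 i \<in> Mj n j) (e_ab1 i \<in> Mj n j)" using Mj_a12[OF i, of j] Mj_ab1[OF i, of j] unfolding one2_def by auto
qed (simp_all add: edefs)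
lemma ok_a2: assumes n: "1 \<le> n" and i: "i < n"
  shows "\<exists>!e. e \<in> Mj n j \<and> (4*int i+2,(-1)) \<in> e"
proof (rule ex1I2[OF Mj_E[OF n] inc_a2])
  show "one2 (e_a12 i \<in> Mj n j) (e_a23 i \<in> Mj n j)" using Mj_a12[OF i, of j] Mj_a23[OF i, of j] unfolding one2_def by auto
qed (simp_all add: edefs)
lemma ok_a3: assumes n: "1 \<le> n" and i: "i < n"
  shows "\<exists>!e. e \<in> Mj n j \<and> (4*int i+3,(-1)) \<in> e"
proof (rule ex1I2[OF Mj_E[OF n] inc_a3])
  show "one2 (e_a23 i \<in> Mj n j) (e_ab3 i \<in> Mj n j)" using Mj_a23[OF i, of j] Mj_ab3[OF i, of j] unfolding one2_def by auto
qed (simp_all add: edefs)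
lemma ok_b1: assumes n: "1 \<le> n" and i: "i < n"
  shows "\<exists>!e. e \<in> Mj n j \<and> (4*int i+1,0) \<in> e"
proof (rule ex1I3[OF Mj_E[OF n] inc_b1])
  show "one3 (e_r0 i \<in> Mj n j) (e_b12 i \<in> Mj n j) (e_ab1 i \<in> Mj n j)" using Mj_r0[OF i, of j] Mj_b12[OF i, of j] Mj_ab1[OF i, of j] unfolding one3_def by auto
qed (simp_all add: edefs)
lemma ok_b2: assumes n: "1 \<le> n" and i: "i < n"
  shows "\<exists>!e. e \<in> Mj n j \<and> (4*int i+2,0) \<in> e"
proof (rule ex1I3[OF Mj_E[OF n] inc_b2])
  show "one3 (e_b12 i \<in> Mj n j) (e_b23 i \<in> Mj n j) (e_bc2 i \<in> Mj n j)" using Mj_b12[OF i, of j] Mj_b23[OF i, of j] Mj_bc2[OF i, of j] unfolding one3_def by auto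
qed (simp_all add: edefs)
lemma ok_b3: assumes n: "1 \<le> n" and i: "i < n"
  shows "\<exists>!e. e \<in> Mj n j \<and> (4*int i+3,0) \<in> e"
proof (rule ex1I3[OF Mj_E[OF n] inc_b3])
  show "one3 (e_b23 i \<in> Mj n j) (e_ab3 i \<in> Mj n j) (e_R0 i \<in> Mj n j)" using Mj_b23[OF i, of j] Mj_ab3[OF i, of j] Mj_R0[OF i, of j] unfolding one3_def by auto
qed (simp_all add: edefs)
lemma ok_c1: assumes n: "1 \<le> n" and i: "i < n"
  shows "\<exists>!e. e \<in> Mj n j \<and> (4*int i+1,1) \<in> e"
proof (rule ex1I3[OF Mj_E[OF n] inc_c1])
  show "one3 (e_r1 i \<in> Mj n j) (e_c12 i \<in> Mj n j) (e_cd1 i \<in> Mj n j)" using Mj_r1[OF i, of j] Mj_c12[OF i, of j] Mj_cd1[OF i, of j] unfolding one3_def by auto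
qed (simp_all add: edefs)
lemma ok_c2: assumes n: "1 \<le> n" and i: "i < n"
  shows "\<exists>!e. e \<in> Mj n j \<and> (4*int i+2,1) \<in> e"
proof (rule ex1I3[OF Mj_E[OF n] inc_c2])
  show "one3 (e_c12 i \<in> Mj n j) (e_c23 i \<in> Mj n j) (e_bc2 i \<in> Mj n j)" using Mj_c12[OF i, of j] Mj_c23[OF i, of j] Mj_bc2[OF i, of j] unfolding one3_def by auto
qed (simp_all add: edefs)
lemma ok_c3: assumes n: "1 \<le> n" and i: "i < n"
  shows "\<exists>!e. e \<in> Mj n j \<and> (4*int i+3,1) \<in> e"
proof (rule ex1I3[OF Mj_E[OF n] inc_c3])
  show "one3 (e_c23 i \<in> Mj n j) (e_cd3 i \<in> Mj n j) (e_R1 i \<in> Mj n j)" using Mj_c23[OF i, of j] Mj_cd3[OF i, of j] Mj_R1[OF i, of j] unfolding one3_def by auto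
qed (simp_all add: edefs)
lemma ok_d1: assumes n: "1 \<le> n" and i: "i < n"
  shows "\<exists>!e. e \<in> Mj n j \<and> (4*int i+1,2) \<in> e"
proof (rule ex1I2[OF Mj_E[OF n] inc_d1])
  show "one2 (e_d12 i \<in> Mj n j) (e_cd1 i \<in> Mj n j)" using Mj_d12[OF i, of j] Mj_cd1[OF i, of j] unfolding one2_def by auto
qed (simp_all add: edefs)
lemma ok_d2: assumes n: "1 \<le> n" and i: "i < n"
  shows "\<exists>!e. e \<in> Mj n j \<and> (4*int i+2,2) \<in> e"
proof (rule ex1I2[OF Mj_E[OF n] inc_d2])
  show "one2 (e_d12 i \<in> Mj n j) (e_d23 i \<in> Mj n j)" using Mj_d12[OF i, of j] Mj_d23[OF i, of j] unfolding one2_def by auto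
qed (simp_all add: edefs)
lemma ok_d3: assumes n: "1 \<le> n" and i: "i < n"
  shows "\<exists>!e. e \<in> Mj n j \<and> (4*int i+3,2) \<in> e"
proof (rule ex1I2[OF Mj_E[OF n] inc_d3])
  show "one2 (e_d23 i \<in> Mj n j) (e_cd3 i \<in> Mj n j)" using Mj_d23[OF i, of j] Mj_cd3[OF i, of j] unfolding one2_def by auto
qed (simp_all add: edefs)
lemma Mj_pm: assumes n: "1 \<le> n" and j: "j \<le> n"
  shows "perfect_matching (pyrene_V n) (pyrene_E n) (Mj n j)"
  unfolding perfect_matching_def
proof (intro conjI ballI)
  show "Mj n j \<subseteq> pyrene_E n" by (rule Mj_E[OF n])
  fix v assume "v \<in> pyrene_V n"
  then obtain i where i: "i < n" "v \<in> FragV i" unfolding V_eq by blast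
  have P: "\<exists>!e. e \<in> Mj n j \<and> (4*int k, y) \<in> e" if "k \<le> n" "y = 0 \<or> y = 1" for k y
    using P_ok[OF n j that] .
  have Q: "\<exists>!e. e \<in> Mj n j \<and> (4*int i+4, y) \<in> e" if "y = 0 \<or> y = 1" for y
  proof -
    have eq: "(4*int i+4, y) = (4*int (Suc i), y)" by simp
    have si: "Suc i \<le> n" using i(1) by simp
    show ?thesis unfolding eq by (rule P[OF si that])
  qed
  have P0: "\<exists>!e. e \<in> Mj n j \<and> (4*int i, y) \<in> e" if "y = 0 \<or> y = 1" for y
    using P[of i y] i(1) that by simp
  from i(2) show "\<exists>!e. e \<in> Mj n j \<and> v \<in> e"
    unfolding FragV_def insert_iff empty_iff simp_thms
    using P0[of 0] P0[of 1] Q[of 0] Q[of 1] ok_a1[OF n i(1)] ok_a2[OF n i(1)] ok_a3[OF n i(1)] ok_b1[OF n i(1)] ok_b2[OF n i(1)] ok_b3[OF n i(1)] ok_c1[OF n i(1)] ok_c2[OF n i(1)] ok_c3[OF n i(1)] ok_d1[OF n i(1)] ok_d2[OF n i(1)] ok_d3[OF n i(1)]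
    by (elim disjE) simp_all
qed

lemma Mj_lower: assumes n: "1 \<le> n" and j: "j \<le> n"
  shows "n + j \<le> forcing_number (pyrene_V n) (pyrene_E n) (Mj n j)"
proof -
  note pm = Mj_pm[OF n j]
  have fin: "finite (Mj n j)" using finite_subset[OF Mj_E[OF n] finite_E] .
  define A where "A t = (if t < j then {e_a12 t, e_ab3 t, e_b12 t} else if t < n then {e_R0 t, e_R1 t, e_bc2 t}
     else {e_c12 (t-n), e_cd3 (t-n), e_d12 (t-n)})" for t
  define g where "g t = (if t < n then t else t - n)" for t
  have AK: "A t \<subseteq> K (g t)" for t
  proof (cases "t < n")
    case True then show ?thesis unfolding A_def g_def K_def by simp
  next
    case False then have "\<not> t < j" using j by simp
    then show ?thesis using False unfolding A_def g_def K_def by simp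
  qed
  have "card {..<n+j} \<le> forcing_number (pyrene_V n) (pyrene_E n) (Mj n j)"
  proof (rule fn_lower[OF pm forcing_exists[OF pm EV E_ne] fin, where A = A])
    show "finite {..<n+j}" by simp
    show "A t \<subseteq> Mj n j" if "t \<in> {..<n+j}" for t
    proof -
      have t: "t < n + j" using that by simp
      consider (a) "t < j" | (b) "j \<le> t" "t < n" | (c) "n \<le> t" by linarith
      then show ?thesis
      proof cases
        case a then have tn: "t < n" using j by simp
        show ?thesis unfolding A_def using a Mj_a12[OF tn, of j] Mj_ab3[OF tn, of j] Mj_b12[OF tn, of j] by simp
      next
        case b
        show ?thesis unfolding A_def using b Mj_R0[OF b(2), of j] Mj_R1[OF b(2), of j] Mj_bc2[OF b(2), of j] by simp
      next
        case c
        have s: "t - n < j" "t - n < n" using c t j by auto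
        show ?thesis unfolding A_def using c j Mj_c12[OF s(2), of j] Mj_cd3[OF s(2), of j] Mj_d12[OF s(2), of j] s(1) by simp
      qed
    qed
    show "\<exists>M'. perfect_matching (pyrene_V n) (pyrene_E n) M' \<and> M' \<noteq> Mj n j \<and> Mj n j - A t \<subseteq> M'"
      if "t \<in> {..<n+j}" for t
    proof -
      have t: "t < n + j" using that by simp
      consider (a) "t < j" | (b) "j \<le> t" "t < n" | (c) "n \<le> t" by linarith
      then show ?thesis
      proof cases
        case a then have tn: "t < n" using j by simp
        have "A t = {e_a12 t, e_ab3 t, e_b12 t}" unfolding A_def using a by simp
        then show ?thesis using alt_bot1[OF pm tn] Mj_a12[OF tn, of j] Mj_ab3[OF tn, of j] Mj_b12[OF tn, of j] a by simp
      next
        case b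
        have "A t = {e_R0 t, e_R1 t, e_bc2 t}" unfolding A_def using b j by simp
        then show ?thesis using alt_h2[OF pm b(2)] Mj_R0[OF b(2), of j] Mj_R1[OF b(2), of j] Mj_bc2[OF b(2), of j] b by simp
      next
        case c
        have s: "t - n < j" "t - n < n" using c t j by auto
        have "A t = {e_c12 (t-n), e_cd3 (t-n), e_d12 (t-n)}" unfolding A_def using c j by simp
        then show ?thesis using alt_top[OF pm s(2)] Mj_c12[OF s(2), of j] Mj_cd3[OF s(2), of j] Mj_d12[OF s(2), of j] s(1) by simp
      qed
    qed
    show "A s \<inter> A t = {}" if st: "s \<in> {..<n+j}" "t \<in> {..<n+j}" "s \<noteq> t" for s t
    proof (cases "g s = g t")
      case False
      then show ?thesis using AK[of s] AK[of t] K_disj[OF False] by blast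
    next
      case True
      have "(s < n \<and> n \<le> t \<and> t - n = s) \<or> (t < n \<and> n \<le> s \<and> s - n = t)"
        using True st(3) unfolding g_def by (auto split: if_splits)
      then show ?thesis
      proof
        assume h: "s < n \<and> n \<le> t \<and> t - n = s"
        then have "s < j" using st(2) by auto
        then have "A s = {e_a12 s, e_ab3 s, e_b12 s}" "A t = {e_c12 s, e_cd3 s, e_d12 s}"
          unfolding A_def using h j by auto
        then show ?thesis by (simp add: edefs doubleton_eq_iff)
      next
        assume h: "t < n \<and> n \<le> s \<and> s - n = t"
        then have "t < j" using st(1) by auto
        then have "A t = {e_a12 t, e_ab3 t, e_b12 t}" "A s = {e_c12 t, e_cd3 t, e_d12 t}"
          unfolding A_def using h j by auto
        then show ?thesis by (simp add: edefs doubleton_eq_iff)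
      qed
    qed
  qed
  then show ?thesis by simp
qed

lemma Mj_upper: assumes n: "1 \<le> n" and j: "j \<le> n"
  shows "forcing_number (pyrene_V n) (pyrene_E n) (Mj n j) \<le> n + j"
proof -
  note pm = Mj_pm[OF n j]
  define S where "S = e_b12 ` {..<j} \<union> e_c12 ` {..<j} \<union> e_R0 ` {j..<n}"
  have SM: "S \<subseteq> Mj n j"
  proof -
    have "e_b12 i \<in> Mj n j" "e_c12 i \<in> Mj n j" if "i < j" for i
      using Mj_b12[of i n j] Mj_c12[of i n j] that j by auto
    moreover have "e_R0 i \<in> Mj n j" if "j \<le> i" "i < n" for i
      using Mj_R0[of i n j] that by auto
    ultimately show ?thesis unfolding S_def by auto
  qed
  have fin: "finite S" unfolding S_def by simp
  have card: "card S \<le> n + j"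
  proof -
    have "card S \<le> card (e_b12 ` {..<j} \<union> e_c12 ` {..<j}) + card (e_R0 ` {j..<n})"
      unfolding S_def by (rule card_Un_le)
    also have "\<dots> \<le> card (e_b12 ` {..<j}) + card (e_c12 ` {..<j}) + card (e_R0 ` {j..<n})"
      using card_Un_le by (intro add_mono) auto
    also have "\<dots> \<le> card {..<j} + card {..<j} + card {j..<n}"
      by (intro add_mono card_image_le) auto
    finally show ?thesis using j by simp
  qed
  have fs: "forcing_set (pyrene_V n) (pyrene_E n) (Mj n j) S"
    unfolding forcing_set_def
  proof (intro conjI allI impI)
    show "S \<subseteq> Mj n j" by (rule SM)
    fix M' assume a: "perfect_matching (pyrene_V n) (pyrene_E n) M' \<and> S \<subseteq> M'"
    then have pm': "perfect_matching (pyrene_V n) (pyrene_E n) M'" and SM': "S \<subseteq> M'" by simp_all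
    show "M' = Mj n j"
    proof (rule agree_eq[OF pm pm' n])
      fix i assume i: "i < n"
      show "C1 (Mj n j) M' i \<or> C2 (Mj n j) M' i"
      proof (cases "i < j")
        case True
        have "e_b12 i \<in> S" "e_c12 i \<in> S" unfolding S_def using True by auto
        then have "C1 (Mj n j) M' i" unfolding C1_def
          using SM' Mj_r0[OF i, of j] Mj_ab1[OF i, of j] Mj_c23[OF i, of j] Mj_bc2[OF i, of j] True by auto
        then show ?thesis by blast
      next
        case False
        have "e_R0 i \<in> S" unfolding S_def using False i by auto
        then have "C2 (Mj n j) M' i" unfolding C2_def using SM' Mj_R0[OF i, of j] False by auto
        then show ?thesis by blast
      qed
    qed
  qed
  show ?thesis using fn_upper[OF fs fin] card by simp
qed

theorem corollary3p3:
  fixes n :: nat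
  assumes "n \<ge> 1"
  shows "min_forcing_number (pyrene_V n) (pyrene_E n) = n
       \<and> max_forcing_number (pyrene_V n) (pyrene_E n) = 2 * n
       \<and> forcing_spectrum (pyrene_V n) (pyrene_E n) = {n..2 * n}"
proof -
  have n: "1 \<le> n" using assms by simp
  have spec: "forcing_spectrum (pyrene_V n) (pyrene_E n) = {n..2 * n}"
  proof
    show "forcing_spectrum (pyrene_V n) (pyrene_E n) \<subseteq> {n..2 * n}"
      unfolding forcing_spectrum_def using lower_n upper_2n[OF _ n] by auto
    show "{n..2 * n} \<subseteq> forcing_spectrum (pyrene_V n) (pyrene_E n)"
    proof
      fix k assume k: "k \<in> {n..2*n}"
      define j where "j = k - n"
      have j: "j \<le> n" "k = n + j" using k unfolding j_def by auto
      have "forcing_number (pyrene_V n) (pyrene_E n) (Mj n j) = k"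
        using Mj_lower[OF n j(1)] Mj_upper[OF n j(1)] j(2) by simp
      then show "k \<in> forcing_spectrum (pyrene_V n) (pyrene_E n)"
        unfolding forcing_spectrum_def using Mj_pm[OF n j(1)] by blast
    qed
  qed
  have mn: "min_forcing_number (pyrene_V n) (pyrene_E n) = n"
    unfolding min_forcing_number_def spec by (rule Min_eqI) auto
  have mx: "max_forcing_number (pyrene_V n) (pyrene_E n) = 2 * n"
    unfolding max_forcing_number_def spec by (rule Max_eqI) auto
  show ?thesis using mn mx spec by simp
qed

end
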